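(* Let $P\subset\mathbb{R}^D$ be an $(\epsilon_1,\epsilon_2)$-significant instance of $k$-center clustering with $z$ outliers, $|P|=n$, and let $\eta\in(0,1)$. Consider the following algorithm: (1) sample a set $S$ of $\frac{k}{\epsilon_1}\log\frac{k}{\eta}$ points uniformly at random from $P$; (2) let $k'=\frac{1}{\eta}\frac{\epsilon_2}{k}|S|$ and run Gonzalez's algorithm for $(k+k')$-center clustering on $S$; output the set $H$ of $k+k'$ centers it returns. Then $|H|=k+\frac{1}{\eta}\frac{\epsilon_2}{\epsilon_1}\log\frac{k}{\eta}$, and with probability at least $(1-\eta)^2$, $\Delta^{-z}_{\infty}(P,H)\le 4r_{opt}$.
   Context: For a finite $H\subset\mathbb{R}^D$ and a point $p$, $dist(p,H)=\min_{q\in H}\|p-q\|$. For an integer $0<z<n$, $\Delta^{-z}_{\infty}(P,H)=\min\{\max_{p\in P'}dist(p,H): P'\subset P, |P'|=n-z\}$. The $k$-center clustering with $z$ outliers problem asks for $k$ centers $C\subset\mathbb{R}^D$ minimizing $\Delta^{-z}_{\infty}(P,C)$; $r_{opt}$ denotes this optimal value. $P_{opt}\subset P$ with $|P_{opt}|=n-z$ denotes the set of inliers of an optimal solution, and $C^*_1,\dots,C^*_k$ are the optimal clusters forming $P_{opt}$ (each point of $P_{opt}$ assigned to its nearest optimal center). The instance is $(\epsilon_1,\epsilon_2)$-significant ($\epsilon_1,\epsilon_2>0$) if $\min_{1\le j\le k}|C^*_j|\ge\frac{\epsilon_1}{k}n$ and $z=\frac{\epsilon_2}{k}n$. Sampling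 uniformly at random means each sample point is drawn independently and uniformly from $P$. Gonzalez's algorithm for $m$-center clustering on $S$: pick an arbitrary point of $S$ as the first center, then repeatedly add as a new center the point of $S$ farthest from the current centers, until $m$ centers are chosen; it is a 2-approximation, i.e., all of $S$ is covered by balls of radius at most twice the optimal $m$-center radius of $S$ around the returned centers. *)

theory Defs
  imports "HOL-Analysis.Analysis" "HOL-Probability.Probability"
begin

text \<open>dist(p,H) is the library's infdist (= min over finite nonempty H).\<close>

definition outlier_cost :: "'a::euclidean_space set \<Rightarrow> nat \<Rightarrow> 'a set \<Rightarrow> real" where
  "outlier_cost P z H =
     Min {Max ((\<lambda>p. infdist p H) ` P') | P'. P' \<subseteq> P \<and> card P' = card P - z}"

definition r_opt :: "'a::euclidean_space set \<Rightarrow> nat \<Rightarrow> nat \<Rightarrow> real" where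
  "r_opt P k z = Inf (outlier_cost P z ` {C. finite C \<and> card C = k})"

definition significant :: "'a::euclidean_space set \<Rightarrow> nat \<Rightarrow> nat \<Rightarrow> real \<Rightarrow> real \<Rightarrow> bool" where
  "significant P k z eps1 eps2 \<longleftrightarrow>
     real z = eps2 / real k * real (card P) \<and>
     (\<exists>(c :: nat \<Rightarrow> 'a) Popt (asg :: 'a \<Rightarrow> nat).
        inj_on c {..<k} \<and>
        outlier_cost P z (c ` {..<k}) = r_opt P k z \<and>
        Popt \<subseteq> P \<and> card Popt = card P - z \<and>
        Max ((\<lambda>p. infdist p (c ` {..<k})) ` Popt) = r_opt P k z \<and>
        (\<forall>p\<in>Popt. asg p < k \<and> dist p (c (asg p)) = infdist p (c ` {..<k})) \<and>
        (\<forall>j<k. real (card {p\<in>Popt. asg p = j}) \<ge> eps1 / real k * real (card P)))"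

text \<open>cs is a possible output (list of m centers, in order of selection) of Gonzalez's
  algorithm on S: first center arbitrary in S, each later one a farthest point of S
  from the previously chosen centers (ties arbitrary).\<close>
definition gonzalez_run :: "'a::euclidean_space set \<Rightarrow> nat \<Rightarrow> 'a list \<Rightarrow> bool" where
  "gonzalez_run S m cs \<longleftrightarrow>
     length cs = m \<and> set cs \<subseteq> S \<and>
     (\<forall>i. 0 < i \<and> i < m \<longrightarrow>
        (\<forall>q\<in>S. infdist q (set (take i cs)) \<le> infdist (cs ! i) (set (take i cs))))"

end

theory Submission imports Defs begin

lemma step_exp:
  fixes P :: "'a set" and h :: "(nat \<Rightarrow> 'a) \<Rightarrow> real"
  assumes "finite P" "P \<noteq> {}"
  shows "measure_pmf.expectation (Pi_pmf {..<Suc m} d (\<lambda>_. pmf_of_set P)) h =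
    (\<Sum>a\<in>P. measure_pmf.expectation (Pi_pmf {..<m} d (\<lambda>_. pmf_of_set P)) (\<lambda>f. h (f(m:=a)))) / real (card P)"
proof -
  let ?Q = "Pi_pmf {..<m} d (\<lambda>_. pmf_of_set P)"
  have fin: "finite (set_pmf ?Q)" using assms by (auto simp: set_Pi_pmf )
  have "Pi_pmf {..<Suc m} d (\<lambda>_. pmf_of_set P) = pmf_of_set P \<bind> (\<lambda>y. map_pmf (\<lambda>f. f(m:=y)) ?Q)"
    unfolding lessThan_Suc by (subst Pi_pmf_insert') (auto simp: map_pmf_def)
  also have "measure_pmf.expectation \<dots> h = (\<Sum>a\<in>P. measure_pmf.expectation (map_pmf (\<lambda>f. f(m:=a)) ?Q) h /\<^sub>R real (card P))"
    using assms fin by (intro pmf_expectation_bind_pmf_of_set) auto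
  finally show ?thesis by (simp add: fun_upd_def sum_distrib_left divide_inverse_commute)
qed

lemma step_prob:
  fixes P :: "'a set"
  assumes "finite P" "P \<noteq> {}"
  shows "measure_pmf.prob (Pi_pmf {..<Suc m} d (\<lambda>_. pmf_of_set P)) E =
    (\<Sum>a\<in>P. measure_pmf.prob (Pi_pmf {..<m} d (\<lambda>_. pmf_of_set P)) {f. f(m:=a) \<in> E}) / real (card P)"
proof -
  have ie: "measure_pmf.prob Q A = measure_pmf.expectation Q (indicator A)" for Q :: "(nat \<Rightarrow> 'a) pmf" and A
    by simp
  have ind: "indicator {f. f(m:=a) \<in> E} = (\<lambda>f. indicator E (f(m:=a)) :: real)" for a
    by (auto simp: indicator_def)
  show ?thesis unfolding ie ind by (rule step_exp[OF assms])
qed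

definition hit :: "'a set \<Rightarrow> ('a \<Rightarrow> nat) \<Rightarrow> nat \<Rightarrow> nat set \<Rightarrow> (nat \<Rightarrow> 'a) \<Rightarrow> bool" where
  "hit Q asg m J f \<longleftrightarrow> (\<forall>j\<in>J. \<exists>i<m. f i \<in> Q \<and> asg (f i) = j)"

definition cnt :: "'a set \<Rightarrow> nat \<Rightarrow> (nat \<Rightarrow> 'a) \<Rightarrow> nat" where
  "cnt Q m f = card {i. i < m \<and> f i \<notin> Q}"

lemma hit_Suc: "hit Q asg (Suc m) J (f(m:=x)) =
   (if x \<in> Q then hit Q asg m (J - {asg x}) f else hit Q asg m J f)"
  unfolding hit_def by (auto simp: less_Suc_eq)

lemma cnt_Suc: "cnt Q (Suc m) (f(m:=x)) = cnt Q m f + (if x \<notin> Q then 1 else 0)"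
proof -
  have "{i. i < Suc m \<and> (f(m:=x)) i \<notin> Q} = {i. i < m \<and> f i \<notin> Q} \<union> (if x \<notin> Q then {m} else {})"
    by (auto simp: less_Suc_eq)
  then show ?thesis unfolding cnt_def by (auto simp: card_insert_if)
qed

lemma hit_0: "hit Q asg 0 J f \<longleftrightarrow> J = {}"
  unfolding hit_def by auto

lemma cnt_0: "cnt Q 0 f = 0"
  unfolding cnt_def by auto

lemma harris_arith:
  fixes S a b0 b1 q r c1 c0 n :: real
  assumes "n = q + r" "n > 0" "r \<ge> 0" "q \<ge> 0" "S \<ge> q * a" "b1 \<ge> b0" "c1 \<ge> S * b1" "c0 \<ge> a * b0"
    "a \<ge> 0" "b0 \<ge> 0"
  shows "(c1 + r * c0) / n \<ge> ((S + r * a) / n) * ((q * b1 + r * b0) / n)"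
proof -
  have k: "r * (b1 - b0) * (S - q * a) \<ge> 0" using assms by simp
  have "(S + r * a) * (q * b1 + r * b0) \<le> n * (S * b1 + r * (a * b0))"
    using k unfolding assms(1) by (simp add: algebra_simps)
  also have "\<dots> \<le> n * (c1 + r * c0)"
    using assms by (intro mult_left_mono add_mono mult_left_mono) auto
  finally have "(S + r * a) * (q * b1 + r * b0) \<le> n * (c1 + r * c0)" .
  then have "(S + r * a) * (q * b1 + r * b0) / (n * n) \<le> n * (c1 + r * c0) / (n * n)"
    using assms(2) by (intro divide_right_mono) auto
  moreover have "((S + r * a) / n) * ((q * b1 + r * b0) / n) = (S + r * a) * (q * b1 + r * b0) / (n * n)"
    by simp
  moreover have "n * (c1 + r * c0) / (n * n) = (c1 + r * c0) / n" using assms(2) by simp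
  ultimately show ?thesis by simp
qed


definition mu :: "'a set \<Rightarrow> 'a \<Rightarrow> nat \<Rightarrow> (nat \<Rightarrow> 'a) pmf" where
  "mu P d m = Pi_pmf {..<m} d (\<lambda>_. pmf_of_set P)"

lemma sum_split_if:
  assumes "finite P" "Q \<subseteq> P"
  shows "(\<Sum>x\<in>P. if x \<in> Q then F x else (G::real)) = sum F Q + real (card (P - Q)) * G"
proof -
  have "(\<Sum>x\<in>P. if x \<in> Q then F x else G) = sum F (P \<inter> {x. x \<in> Q}) + sum (\<lambda>_. G) (P \<inter> - {x. x \<in> Q})"
    using assms(1) by (rule sum.If_cases)
  moreover have "P \<inter> {x. x \<in> Q} = Q" "P \<inter> - {x. x \<in> Q} = P - Q" using assms(2) by auto
  ultimately show ?thesis by simp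
qed

lemma prob_mu_0: "measure_pmf.prob (mu P d 0) E = (if (\<lambda>_. d) \<in> E then 1 else 0)"
  unfolding mu_def by (simp add: indicator_def)

lemma harris:
  assumes "finite P" "P \<noteq> {}" "Q \<subseteq> P"
  shows "measure_pmf.prob (mu P d m) {f. hit Q asg m J f \<and> cnt Q m f \<le> t} \<ge>
         measure_pmf.prob (mu P d m) {f. hit Q asg m J f} * measure_pmf.prob (mu P d m) {f. cnt Q m f \<le> t}"
proof (induction m arbitrary: J t)
  case 0
  then show ?case by (simp add: prob_mu_0 hit_0 cnt_0)
next
  case (Suc m)
  let ?Pr = "measure_pmf.prob (mu P d m)"
  define a where "a J = ?Pr {f. hit Q asg m J f}" for J
  define b where "b t = ?Pr {f. cnt Q m f \<le> t}" for t
  define c where "c J t = ?Pr {f. hit Q asg m J f \<and> cnt Q m f \<le> t}" for J t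
  define b0 where "b0 = ?Pr {f. cnt Q m f + 1 \<le> t}"
  define c0 where "c0 = ?Pr {f. hit Q asg m J f \<and> cnt Q m f + 1 \<le> t}"
  define S where "S = (\<Sum>x\<in>Q. a (J - {asg x}))"
  have n: "real (card P) = real (card Q) + real (card (P - Q))" "real (card P) > 0"
    using assms by (auto simp: card_Diff_subset card_mono finite_subset of_nat_diff)
  have stepP: "measure_pmf.prob (mu P d (Suc m)) E = (\<Sum>x\<in>P. ?Pr {f. f(m:=x) \<in> E}) / real (card P)" for E
    unfolding mu_def by (rule step_prob[OF assms(1,2)])
  have L: "measure_pmf.prob (mu P d (Suc m)) {f. hit Q asg (Suc m) J f \<and> cnt Q (Suc m) f \<le> t}
      = ((\<Sum>x\<in>Q. c (J - {asg x}) t) + real (card (P - Q)) * c0) / real (card P)"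
  proof -
    have "?Pr {f. f(m:=x) \<in> {f. hit Q asg (Suc m) J f \<and> cnt Q (Suc m) f \<le> t}} =
        (if x \<in> Q then c (J - {asg x}) t else c0)" for x
      by (simp add: hit_Suc cnt_Suc c_def c0_def)
    then show ?thesis by (simp add: stepP sum_split_if[OF assms(1,3)])
  qed
  have A: "measure_pmf.prob (mu P d (Suc m)) {f. hit Q asg (Suc m) J f}
      = (S + real (card (P - Q)) * a J) / real (card P)"
  proof -
    have "?Pr {f. f(m:=x) \<in> {f. hit Q asg (Suc m) J f}} =
        (if x \<in> Q then a (J - {asg x}) else a J)" for x
      by (simp add: hit_Suc a_def)
    then show ?thesis by (simp add: stepP sum_split_if[OF assms(1,3)] S_def)
  qed
  have B: "measure_pmf.prob (mu P d (Suc m)) {f. cnt Q (Suc m) f \<le> t}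
      = (real (card Q) * b t + real (card (P - Q)) * b0) / real (card P)"
  proof -
    have "?Pr {f. f(m:=x) \<in> {f. cnt Q (Suc m) f \<le> t}} =
        (if x \<in> Q then b t else b0)" for x
      by (simp add: cnt_Suc b_def b0_def)
    then show ?thesis by (simp add: stepP sum_split_if[OF assms(1,3)])
  qed
  have amono: "a J \<le> a (J - {j})" for j
    unfolding a_def by (rule measure_pmf.finite_measure_mono) (auto simp: hit_def)
  have Sge: "S \<ge> real (card Q) * a J"
  proof -
    have "real (card Q) * a J = (\<Sum>x\<in>Q. a J)" by simp
    also have "\<dots> \<le> S" unfolding S_def by (intro sum_mono amono)
    finally show ?thesis .
  qed
  have bmono: "b0 \<le> b t"
    unfolding b_def b0_def by (rule measure_pmf.finite_measure_mono) auto
  have c1: "(\<Sum>x\<in>Q. c (J - {asg x}) t) \<ge> S * b t"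
    unfolding S_def sum_distrib_right
    by (intro sum_mono) (use Suc.IH in \<open>auto simp: a_def b_def c_def\<close>)
  have c0: "c0 \<ge> a J * b0"
  proof (cases t)
    case 0
    then show ?thesis by (simp add: c0_def b0_def)
  next
    case (Suc t')
    then show ?thesis using Suc.IH[of J t'] by (simp add: c0_def b0_def a_def)
  qed
  have "((S + real (card (P - Q)) * a J) / real (card P)) * ((real (card Q) * b t + real (card (P - Q)) * b0) / real (card P))
     \<le> ((\<Sum>x\<in>Q. c (J - {asg x}) t) + real (card (P - Q)) * c0) / real (card P)"
    by (rule harris_arith[OF n(1,2) _ _ Sge bmono c1 c0]) (auto simp: a_def b0_def)
  then show ?case unfolding L A B .
qed


lemma finite_set_mu: "finite P \<Longrightarrow> P \<noteq> {} \<Longrightarrow> finite (set_pmf (mu P d m))"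
  unfolding mu_def by (auto simp: set_Pi_pmf )

lemma prob_all:
  assumes "finite P" "P \<noteq> {}"
  shows "measure_pmf.prob (mu P d m) {f. \<forall>i<m. f i \<in> X} = (real (card (P \<inter> X)) / real (card P)) ^ m"
proof (induction m)
  case 0
  then show ?case by (simp add: prob_mu_0)
next
  case (Suc m)
  let ?Pr = "measure_pmf.prob (mu P d m)"
  have stepP: "measure_pmf.prob (mu P d (Suc m)) E = (\<Sum>x\<in>P. ?Pr {f. f(m:=x) \<in> E}) / real (card P)" for E
    unfolding mu_def by (rule step_prob[OF assms(1,2)])
  have "?Pr {f. f(m:=x) \<in> {f. \<forall>i<Suc m. f i \<in> X}} = (if x \<in> X then ?Pr {f. \<forall>i<m. f i \<in> X} else 0)" for x
  proof -
    have "{f. f(m:=x) \<in> {f. \<forall>i<Suc m. f i \<in> X}} = (if x \<in> X then {f. \<forall>i<m. f i \<in> X} else {})"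
      by (auto simp: less_Suc_eq)
    then show ?thesis by simp
  qed
  then have "measure_pmf.prob (mu P d (Suc m)) {f. \<forall>i<Suc m. f i \<in> X} =
      (\<Sum>x\<in>P. if x \<in> X then ?Pr {f. \<forall>i<m. f i \<in> X} else 0) / real (card P)"
    by (simp add: stepP)
  also have "(\<Sum>x\<in>P. if x \<in> X then ?Pr {f. \<forall>i<m. f i \<in> X} else 0) = (\<Sum>x\<in>{x\<in>P. x \<in> X}. ?Pr {f. \<forall>i<m. f i \<in> X})"
    by (rule sum.inter_filter[OF assms(1), symmetric])
  also have "{x\<in>P. x \<in> X} = P \<inter> X" by auto
  finally show ?case using Suc.IH by simp
qed

lemma exp_cnt:
  assumes "finite P" "P \<noteq> {}"
  shows "measure_pmf.expectation (mu P d m) (\<lambda>f. real (cnt Q m f)) = real m * real (card (P - Q)) / real (card P)"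
proof (induction m)
  case 0
  then show ?case by (simp add: mu_def cnt_0)
next
  case (Suc m)
  let ?E = "measure_pmf.expectation (mu P d m)"
  have int: "integrable (measure_pmf (mu P d m)) h" for h :: "_ \<Rightarrow> real"
    by (rule integrable_measure_pmf_finite[OF finite_set_mu[OF assms]])
  have e: "?E (\<lambda>f. real (cnt Q (Suc m) (f(m:=x)))) = ?E (\<lambda>f. real (cnt Q m f)) + (if x \<notin> Q then 1 else 0)" for x
  proof -
    have "?E (\<lambda>f. real (cnt Q (Suc m) (f(m:=x)))) = ?E (\<lambda>f. real (cnt Q m f) + (if x \<notin> Q then 1 else 0))"
      by (simp add: cnt_Suc)
    also have "\<dots> = ?E (\<lambda>f. real (cnt Q m f)) + (if x \<notin> Q then 1 else 0)"
      by (subst Bochner_Integration.integral_add[OF int int]) auto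
    finally show ?thesis .
  qed
  have "measure_pmf.expectation (mu P d (Suc m)) (\<lambda>f. real (cnt Q (Suc m) f)) =
     (\<Sum>x\<in>P. ?E (\<lambda>f. real (cnt Q m f)) + (if x \<notin> Q then 1 else 0)) / real (card P)"
    unfolding mu_def using step_exp[OF assms, of m d "\<lambda>f. real (cnt Q (Suc m) f)"] e[unfolded mu_def] by simp
  also have "(\<Sum>x\<in>P. ?E (\<lambda>f. real (cnt Q m f)) + (if x \<notin> Q then 1 else 0)) =
      real (card P) * ?E (\<lambda>f. real (cnt Q m f)) + real (card (P - Q))"
  proof -
    have "(\<Sum>x\<in>P. (if x \<notin> Q then 1 else 0 :: real)) = (\<Sum>x\<in>{x\<in>P. x \<notin> Q}. 1)"
      by (rule sum.inter_filter[OF assms(1), symmetric])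
    also have "{x\<in>P. x \<notin> Q} = P - Q" by auto
    finally show ?thesis by (simp add: sum.distrib)
  qed
  finally show ?case using Suc.IH assms by (simp add: field_simps)
qed


lemma gonz_sep:
  fixes cs :: "'a::euclidean_space list"
  assumes run: "gonzalez_run S K cs" and q: "q \<in> S" and big: "infdist q (set cs) > R"
    and ij: "i < j" "j \<le> K"
  shows "dist (if j < K then cs ! j else q) (cs ! i) > R"
proof -
  have len: "length cs = K" "set cs \<subseteq> S" using run by (auto simp: gonzalez_run_def)
  show ?thesis
  proof (cases "j < K")
    case False
    have "cs ! i \<in> set cs" using ij len by auto
    then have "infdist q (set cs) \<le> dist q (cs ! i)" by (rule infdist_le)
    then show ?thesis using False big by simp
  next
    case True
    have j0: "0 < j" using ij by simp
    have mem: "cs ! i \<in> set (take j cs)"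
    proof -
      have "take j cs ! i = cs ! i" using ij by simp
      moreover have "i < length (take j cs)" using ij True len by simp
      ultimately show ?thesis by (metis nth_mem)
    qed
    have g: "infdist q (set (take j cs)) \<le> infdist (cs ! j) (set (take j cs))"
      using run q j0 True unfolding gonzalez_run_def by blast
    have m: "infdist q (set cs) \<le> infdist q (set (take j cs))"
    proof (rule infdist_mono)
      show "set (take j cs) \<subseteq> set cs" by (rule set_take_subset)
      show "set (take j cs) \<noteq> {}" using mem by (metis empty_iff)
    qed
    have "infdist (cs ! j) (set (take j cs)) \<le> dist (cs ! j) (cs ! i)"
      by (rule infdist_le[OF mem])
    then show ?thesis using g m big True by simp
  qed
qed

lemma gonz_cover:
  fixes cs :: "'a::euclidean_space list" and g :: "'a \<Rightarrow> 'b"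
  assumes run: "gonzalez_run S K cs"
    and grp: "g ` S \<subseteq> G" "finite G" "card G \<le> K"
    and close: "\<forall>x\<in>S. \<forall>y\<in>S. g x = g y \<longrightarrow> dist x y \<le> R"
    and q: "q \<in> S"
  shows "infdist q (set cs) \<le> R"
proof (rule ccontr)
  assume "\<not> ?thesis"
  then have big: "infdist q (set cs) > R" by simp
  have len: "length cs = K" "set cs \<subseteq> S" using run by (auto simp: gonzalez_run_def)
  define x where "x i = (if i < K then cs ! i else q)" for i
  have xS: "x i \<in> S" for i using len q by (auto simp: x_def)
  have sep: "dist (x j) (x i) > R" if "i < j" "j \<le> K" for i j
  proof -
    have "i < K" using that by simp
    then show ?thesis using gonz_sep[OF run q big that] by (simp add: x_def)
  qed
  have "inj_on (g \<circ> x) {..K}"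
  proof (rule inj_onI)
    fix i j assume i: "i \<in> {..K}" and j: "j \<in> {..K}" and e: "(g \<circ> x) i = (g \<circ> x) j"
    show "i = j"
    proof (rule ccontr)
      assume "i \<noteq> j"
      then have "i < j \<or> j < i" by auto
      then have "dist (x i) (x j) > R"
        using sep i j by (metis atMost_iff dist_commute)
      moreover have "dist (x i) (x j) \<le> R" using close xS e by auto
      ultimately show False by simp
    qed
  qed
  moreover have "(g \<circ> x) ` {..K} \<subseteq> G" using grp(1) xS by auto
  ultimately have "card {..K} \<le> card G" using grp(2) by (rule card_inj_on_le)
  then show False using grp(3) by simp
qed


lemma deterministic:
  fixes P :: "'a::euclidean_space set" and c :: "nat \<Rightarrow> 'a" and f :: "nat \<Rightarrow> 'a"
  assumes finP: "finite P" and PoptP: "Popt \<subseteq> P" and cardPopt: "card Popt = card P - z"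
    and ne: "Popt \<noteq> {}"
    and maxr: "Max ((\<lambda>p. infdist p (c ` {..<k})) ` Popt) = r"
    and asg: "\<forall>p\<in>Popt. asg p < k \<and> dist p (c (asg p)) = infdist p (c ` {..<k})"
    and hit: "hit Popt asg m {..<k} f" and cnt: "cnt Popt m f \<le> k'"
    and run: "gonzalez_run (f ` {..<m}) (k + k') cs"
  shows "outlier_cost P z (set cs) \<le> 4 * r"
proof -
  define S where "S = f ` {..<m}"
  have finPopt: "finite Popt" using finP PoptP finite_subset by blast
  have rp: "dist p (c (asg p)) \<le> r" if "p \<in> Popt" for p
  proof -
    have "infdist p (c ` {..<k}) \<le> r" unfolding maxr[symmetric]
      using finPopt that by (intro Max_ge) auto
    then show ?thesis using asg that by simp
  qed
  obtain p0 where "p0 \<in> Popt" using ne by auto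
  then have r0: "0 \<le> r" using rp[of p0] zero_le_dist[of p0 "c (asg p0)"] by linarith
  define g where "g y = (if y \<in> Popt then Inl (asg y) else Inr y)" for y
  define G where "G = Inl ` {..<k} \<union> Inr ` (S - Popt)"
  have gS: "g ` S \<subseteq> G" using asg unfolding g_def G_def by auto
  have finS: "finite S" unfolding S_def by simp
  have finG: "finite G" unfolding G_def using finS by simp
  have "S - Popt = f ` {i. i < m \<and> f i \<notin> Popt}" unfolding S_def by auto
  then have "card (S - Popt) \<le> cnt Popt m f" unfolding cnt_def by (simp add: card_image_le)
  then have cardG: "card G \<le> k + k'"
    unfolding G_def using cnt card_Un_le[of "Inl ` {..<k}" "Inr ` (S - Popt)"]
      card_image_le[of "{..<k}" Inl] card_image_le[of "S - Popt" Inr] finS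
    by (metis (no_types, lifting) add_le_mono card_lessThan finite_Diff finite_lessThan le_trans)
  have close: "\<forall>x\<in>S. \<forall>y\<in>S. g x = g y \<longrightarrow> dist x y \<le> 2 * r"
  proof (intro ballI impI)
    fix x y assume "x \<in> S" "y \<in> S" and e: "g x = g y"
    show "dist x y \<le> 2 * r"
    proof (cases "x \<in> Popt")
      case True
      with e have y: "y \<in> Popt" "asg y = asg x" by (auto simp: g_def split: if_splits)
      have "dist x y \<le> dist x (c (asg x)) + dist y (c (asg x))" by (rule dist_triangle2)
      also have "\<dots> \<le> 2 * r" using rp[OF True] rp[OF y(1)] y(2) by simp
      finally show ?thesis .
    next
      case False
      with e have "y = x" by (auto simp: g_def split: if_splits)
      then show ?thesis using r0 by simp
    qed
  qed
  have cover: "infdist q (set cs) \<le> 2 * r" if "q \<in> S" for q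
    using gonz_cover[OF run[folded S_def] gS finG cardG close that] .
  have each: "infdist p (set cs) \<le> 4 * r" if p: "p \<in> Popt" for p
  proof -
    obtain i where i: "i < m" "f i \<in> Popt" "asg (f i) = asg p"
      using hit asg p unfolding hit_def by blast
    have "infdist p (set cs) \<le> infdist (f i) (set cs) + dist p (f i)" by (rule infdist_triangle)
    also have "dist p (f i) \<le> dist p (c (asg p)) + dist (f i) (c (asg p))" by (rule dist_triangle2)
    also have "\<dots> \<le> 2 * r" using rp[OF p] rp[OF i(2)] i(3) by simp
    also have "infdist (f i) (set cs) \<le> 2 * r" using cover[of "f i"] i(1) unfolding S_def by simp
    finally show ?thesis by simp
  qed
  have M: "Max ((\<lambda>p. infdist p (set cs)) ` Popt) \<le> 4 * r"
    using finPopt ne each by (subst Max_le_iff) auto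
  have fin: "finite {Max ((\<lambda>p. infdist p (set cs)) ` P') | P'. P' \<subseteq> P \<and> card P' = card P - z}"
  proof -
    have "{Max ((\<lambda>p. infdist p (set cs)) ` P') | P'. P' \<subseteq> P \<and> card P' = card P - z}
        \<subseteq> (\<lambda>P'. Max ((\<lambda>p. infdist p (set cs)) ` P')) ` Pow P" by auto
    then show ?thesis using finP by (meson finite_Pow_iff finite_imageI finite_subset)
  qed
  have "outlier_cost P z (set cs) \<le> Max ((\<lambda>p. infdist p (set cs)) ` Popt)"
    unfolding outlier_cost_def using PoptP cardPopt by (intro Min_le[OF fin]) auto
  with M show ?thesis by simp
qed


theorem theorem1:
  fixes P :: "'a::euclidean_space set"
    and k z m k' :: nat and eps1 eps2 eta :: real
  assumes "finite P"
    and "0 < z" and "z < card P" and "0 < k"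
    and "eps1 > 0" and "eps2 > 0"
    and "significant P k z eps1 eps2"
    and "0 < eta" and "eta < 1"
    and "real m = real k / eps1 * ln (real k / eta)"
    and "real k' = 1 / eta * (eps2 / real k) * real m"
  shows "(\<forall>(f :: nat \<Rightarrow> 'a) cs. gonzalez_run (f ` {..<m}) (k + k') cs \<longrightarrow>
            real (length cs) = real k + 1 / eta * (eps2 / eps1) * ln (real k / eta))
       \<and> measure_pmf.prob (Pi_pmf {..<m} undefined (\<lambda>_. pmf_of_set P))
           {f. \<forall>cs. gonzalez_run (f ` {..<m}) (k + k') cs \<longrightarrow>
                   outlier_cost P z (set cs) \<le> 4 * r_opt P k z}
         \<ge> (1 - eta) ^ 2"
proof
  note finP = assms(1) and k0 = assms(4) and e1 = assms(5) and eta0 = assms(8) and eta1 = assms(9)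
    and mdef = assms(10) and kdef = assms(11)
  have k'eq: "real k' = 1 / eta * (eps2 / eps1) * ln (real k / eta)"
    using kdef mdef k0 e1 by (simp add: field_simps)
  show "\<forall>(f :: nat \<Rightarrow> 'a) cs. gonzalez_run (f ` {..<m}) (k + k') cs \<longrightarrow>
            real (length cs) = real k + 1 / eta * (eps2 / eps1) * ln (real k / eta)"
    using k'eq by (auto simp: gonzalez_run_def)
  from assms(7) have zdef: "real z = eps2 / real k * real (card P)"
    unfolding significant_def by blast
  from assms(7) obtain c :: "nat \<Rightarrow> 'a" and Popt and asg :: "'a \<Rightarrow> nat" where
    PoptP: "Popt \<subseteq> P" and cardPopt: "card Popt = card P - z" and
    maxr: "Max ((\<lambda>p. infdist p (c ` {..<k})) ` Popt) = r_opt P k z" and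
    asg: "\<forall>p\<in>Popt. asg p < k \<and> dist p (c (asg p)) = infdist p (c ` {..<k})" and
    big: "\<forall>j<k. real (card {p\<in>Popt. asg p = j}) \<ge> eps1 / real k * real (card P)"
    unfolding significant_def by blast
  have Pne: "P \<noteq> {}" using assms(2,3) by auto
  have Poptne: "Popt \<noteq> {}" using cardPopt assms(3) by auto
  define mu' where "mu' = mu P undefined m"
  let ?Pr = "measure_pmf.prob mu'"
  define Good where "Good = {f. hit Popt asg m {..<k} f \<and> cnt Popt m f \<le> k'}"
  have sub: "Good \<subseteq> {f. \<forall>cs. gonzalez_run (f ` {..<m}) (k + k') cs \<longrightarrow>
                   outlier_cost P z (set cs) \<le> 4 * r_opt P k z}"
    unfolding Good_def using deterministic[OF finP PoptP cardPopt Poptne maxr asg] by blast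
  have harr: "?Pr Good \<ge> ?Pr {f. hit Popt asg m {..<k} f} * ?Pr {f. cnt Popt m f \<le> k'}"
    unfolding Good_def mu'_def by (rule harris[OF finP Pne PoptP])
  define X where "X j = {y. \<not> (y \<in> Popt \<and> asg y = j)}" for j
  have each: "?Pr {f. \<forall>i<m. f i \<in> X j} \<le> eta / real k" if j: "j < k" for j
  proof -
    define C where "C = {p\<in>Popt. asg p = j}"
    have eq: "P = (P \<inter> X j) \<union> C" and disj: "(P \<inter> X j) \<inter> C = {}" using PoptP by (auto simp: X_def C_def)
    have "C \<subseteq> P" using PoptP unfolding C_def by blast
    then have finC: "finite C" using finP by (rule finite_subset)
    have u: "card ((P \<inter> X j) \<union> C) = card (P \<inter> X j) + card C"
      by (rule card_Un_disjoint) (use finP finC disj in auto)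
    have "card P = card ((P \<inter> X j) \<union> C)" using eq by (rule arg_cong)
    with u have "card P = card (P \<inter> X j) + card C" by simp
    then have nsum: "real (card P) = real (card (P \<inter> X j)) + real (card C)" by simp
    have npos: "real (card P) > 0" using Pne finP by (simp add: card_gt_0_iff)
    have cbig: "real (card C) \<ge> eps1 / real k * real (card P)" using big j unfolding C_def by blast
    have "eps1 / real k \<le> real (card C) / real (card P)"
      using cbig npos by (simp add: pos_le_divide_eq)
    moreover have "real (card (P \<inter> X j)) / real (card P) = 1 - real (card C) / real (card P)"
      using npos nsum by (simp add: field_simps)
    ultimately have ratio: "real (card (P \<inter> X j)) / real (card P) \<le> 1 - eps1 / real k"
      by linarith
    have r0: "0 \<le> real (card (P \<inter> X j)) / real (card P)" by simp
    have "?Pr {f. \<forall>i<m. f i \<in> X j} = (real (card (P \<inter> X j)) / real (card P)) ^ m"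
      unfolding mu'_def by (rule prob_all[OF finP Pne])
    also have "\<dots> \<le> (1 - eps1 / real k) ^ m" by (rule power_mono[OF ratio r0])
    also have "\<dots> \<le> exp (- (eps1 / real k)) ^ m"
    proof (rule power_mono)
      show "1 - eps1 / real k \<le> exp (- (eps1 / real k))"
        using exp_ge_add_one_self[of "- (eps1 / real k)"] by simp
      show "0 \<le> 1 - eps1 / real k" using ratio r0 by linarith
    qed
    also have "\<dots> = exp (- (eps1 / real k * real m))" by (simp add: exp_of_nat_mult[symmetric] mult.commute)
    also have "eps1 / real k * real m = ln (real k / eta)" using mdef e1 k0 by simp
    also have "exp (- ln (real k / eta)) = eta / real k" using k0 eta0 by (simp add: exp_minus)
    finally show ?thesis .
  qed
  have nothit: "?Pr {f. \<not> hit Popt asg m {..<k} f} \<le> eta"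
  proof -
    have "{f. \<not> hit Popt asg m {..<k} f} \<subseteq> (\<Union>j\<in>{..<k}. {f. \<forall>i<m. f i \<in> X j})"
      unfolding hit_def X_def by auto
    then have "?Pr {f. \<not> hit Popt asg m {..<k} f} \<le> ?Pr (\<Union>j\<in>{..<k}. {f. \<forall>i<m. f i \<in> X j})"
      by (intro measure_pmf.finite_measure_mono) auto
    also have "\<dots> \<le> (\<Sum>j<k. ?Pr {f. \<forall>i<m. f i \<in> X j})"
      by (intro measure_pmf.finite_measure_subadditive_finite) auto
    also have "\<dots> \<le> (\<Sum>j<k. eta / real k)" by (intro sum_mono each) auto
    also have "\<dots> = eta" using k0 by simp
    finally show ?thesis .
  qed
  have pH: "?Pr {f. hit Popt asg m {..<k} f} \<ge> 1 - eta"
  proof -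
    have "1 = ?Pr ({f. hit Popt asg m {..<k} f} \<union> {f. \<not> hit Popt asg m {..<k} f})"
      by (simp add: Un_def)
    also have "\<dots> \<le> ?Pr {f. hit Popt asg m {..<k} f} + ?Pr {f. \<not> hit Popt asg m {..<k} f}"
      by (rule measure_subadditive) (auto simp: measure_pmf.emeasure_eq_measure)
    finally show ?thesis using nothit by simp
  qed
  have E: "measure_pmf.expectation mu' (\<lambda>f. real (cnt Popt m f)) = eta * real k'"
  proof -
    have "card (P - Popt) = z" using cardPopt PoptP finP assms(3)
      by (simp add: card_Diff_subset finite_subset)
    then have "measure_pmf.expectation mu' (\<lambda>f. real (cnt Popt m f)) = real m * real z / real (card P)"
      unfolding mu'_def by (simp add: exp_cnt[OF finP Pne])
    also have "\<dots> = eta * real k'" using zdef kdef eta0 Pne finP by (simp add: field_simps)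
    finally show ?thesis .
  qed
  have markov: "?Pr {f. real k' + 1 \<le> real (cnt Popt m f)} \<le> eta"
  proof -
    have "measure mu' {f \<in> space mu'. real k' + 1 \<le> real (cnt Popt m f)} \<le>
        measure_pmf.expectation mu' (\<lambda>f. real (cnt Popt m f)) / (real k' + 1)"
      by (rule integral_Markov_inequality_measure[where A = UNIV])
        (auto simp: mu'_def intro!: integrable_measure_pmf_finite finite_set_mu[OF finP Pne])
    also have "\<dots> \<le> eta" using E eta0 by (simp add: field_simps)
    finally show ?thesis by simp
  qed
  have pC: "?Pr {f. cnt Popt m f \<le> k'} \<ge> 1 - eta"
  proof -
    have "{f. cnt Popt m f \<le> k'} \<union> {f. real k' + 1 \<le> real (cnt Popt m f)} = UNIV"
    proof -
      have "cnt Popt m f \<le> k' \<or> real k' + 1 \<le> real (cnt Popt m f)" for f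
        by (cases "cnt Popt m f \<le> k'") (auto simp flip: of_nat_Suc)
      then show ?thesis by blast
    qed
    then have "1 = ?Pr ({f. cnt Popt m f \<le> k'} \<union> {f. real k' + 1 \<le> real (cnt Popt m f)})"
      by simp
    also have "\<dots> \<le> ?Pr {f. cnt Popt m f \<le> k'} + ?Pr {f. real k' + 1 \<le> real (cnt Popt m f)}"
      by (rule measure_subadditive) (auto simp: measure_pmf.emeasure_eq_measure)
    finally show ?thesis using markov by simp
  qed
  have "(1 - eta) ^ 2 \<le> ?Pr {f. hit Popt asg m {..<k} f} * ?Pr {f. cnt Popt m f \<le> k'}"
    unfolding power2_eq_square using pH pC eta1 by (intro mult_mono) auto
  also have "\<dots> \<le> ?Pr Good" by (rule harr)
  also have "\<dots> \<le> ?Pr {f. \<forall>cs. gonzalez_run (f ` {..<m}) (k + k') cs \<longrightarrow>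
                   outlier_cost P z (set cs) \<le> 4 * r_opt P k z}"
    by (rule measure_pmf.finite_measure_mono[OF sub]) auto
  finally show "measure_pmf.prob (Pi_pmf {..<m} undefined (\<lambda>_. pmf_of_set P))
           {f. \<forall>cs. gonzalez_run (f ` {..<m}) (k + k') cs \<longrightarrow>
                   outlier_cost P z (set cs) \<le> 4 * r_opt P k z}
         \<ge> (1 - eta) ^ 2" unfolding mu'_def mu_def .
qed

end
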